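(* For every $n\ge 1$ and every $t$ in $J$, $$L_n(t)=\frac1N\sum_{j=1}^{n}\frac{j}{N}\,\frac{d^2}{dt^2}\log L_{n-j}(t),$$ where the $j=n$ term uses $\log L_0(t)=NF(t)$.
   Context: Let $N>0$ be a fixed parameter. Let $\rho$ be a positive Borel measure on $\mathbb R$ with infinite support such that $M(t):=\int_{\mathbb R}e^{tN\epsilon}\,d\rho(\epsilon)$ is finite for all $t$ in an open interval $J$. Write $M(t)=\exp(NF(t))$. For $n\ge 0$ let $\Delta_n(t)=\det\big[M^{(i+j-2)}(t)\big]_{i,j=1}^{n+1}$ be the Hankel determinant of the derivatives of $M$, and set $\Delta_{-1}:=1$; these satisfy $\Delta_n(t)>0$. The Lanczos $L$-functions are defined by $L_0(t)=M(t)$ and, for $n\ge1$, $N^2L_n(t)=\Delta_n(t)\Delta_{n-2}(t)/\Delta_{n-1}(t)^2$. *)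

theory Defs
  imports "HOL-Probability.Probability" "Jordan_Normal_Form.Determinant"
begin

definition measure_support :: "real measure \<Rightarrow> real set" where
  "measure_support \<rho> = {x. \<forall>e>0. emeasure \<rho> (ball x e) > 0}"

definition mgf :: "real \<Rightarrow> real measure \<Rightarrow> real \<Rightarrow> real" where
  "mgf N \<rho> t = (\<integral>\<epsilon>. exp (t * N * \<epsilon>) \<partial>\<rho>)"

text \<open>hankel_det N rho k t is the k x k Hankel determinant
  det [M^(i+j)(t)]_{i,j=0..k-1}.  Thus Delta_n = hankel_det (n+1), and
  hankel_det 0 = 1 = Delta_{-1}.\<close>
definition hankel_det :: "real \<Rightarrow> real measure \<Rightarrow> nat \<Rightarrow> real \<Rightarrow> real" where
  "hankel_det N \<rho> k t =
     Determinant.det (mat k k (\<lambda>(i, j). (deriv ^^ (i + j)) (mgf N \<rho>) t))"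

fun lanczos_L :: "real \<Rightarrow> real measure \<Rightarrow> nat \<Rightarrow> real \<Rightarrow> real" where
  "lanczos_L N \<rho> 0 t = mgf N \<rho> t"
| "lanczos_L N \<rho> (Suc m) t =
     hankel_det N \<rho> (m + 2) t * hankel_det N \<rho> m t
       / (N\<^sup>2 * (hankel_det N \<rho> (m + 1) t)\<^sup>2)"

end

theory Submission
  imports Defs
begin

lemma det_mat_expand:
  "Determinant.det (mat n n f) = (\<Sum>p\<in>{p. p permutes {0..<n}}. signof p * (\<Prod>i=0..<n. f (i, p i)))"
proof -
  have "Determinant.det (mat n n f) = (\<Sum>p\<in>{p. p permutes {0..<n}}. signof p * (\<Prod>i=0..<n. (mat n n f) $$ (i, p i)))"
    by (rule det_def') auto
  also have "\<dots> = (\<Sum>p\<in>{p. p permutes {0..<n}}. signof p * (\<Prod>i=0..<n. f (i, p i)))"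
  proof (rule sum.cong[OF refl])
    fix p assume "p \<in> {p. p permutes {0..<n}}"
    then have p: "p permutes {0..<n}" by simp
    show "signof p * (\<Prod>i=0..<n. (mat n n f) $$ (i, p i)) = signof p * (\<Prod>i=0..<n. f (i, p i))"
      using permutes_in_image[OF p] by (auto intro!: prod.cong)
  qed
  finally show ?thesis .
qed

lemma det_has_deriv:
  fixes e :: "nat \<Rightarrow> nat \<Rightarrow> real \<Rightarrow> real"
  assumes "\<And>i j. i < n \<Longrightarrow> j < n \<Longrightarrow> (e i j has_real_derivative e' i j) (at x)"
  shows "((\<lambda>s. Determinant.det (mat n n (\<lambda>(i,j). e i j s))) has_real_derivative
     (\<Sum>i<n. Determinant.det (mat n n (\<lambda>(a,j). if a = i then e' a j else e a j x)))) (at x)"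
proof -
  let ?P = "{p. p permutes {0..<n}}"
  have fin: "finite ?P" by (simp add: finite_permutations)
  have eq: "(\<lambda>s. Determinant.det (mat n n (\<lambda>(i,j). e i j s))) =
     (\<lambda>s. \<Sum>p\<in>?P. signof p * (\<Prod>i=0..<n. e i (p i) s))"
    by (simp add: det_mat_expand)
  have D: "((\<lambda>s. \<Sum>p\<in>?P. signof p * (\<Prod>i=0..<n. e i (p i) s)) has_real_derivative
      (\<Sum>p\<in>?P. signof p * (\<Sum>i\<in>{0..<n}. e' i (p i) * (\<Prod>l\<in>{0..<n} - {i}. e l (p l) x)))) (at x)"
  proof (intro DERIV_sum DERIV_cmult has_field_derivative_prod)
    fix p i assume "p \<in> ?P" "i \<in> {0..<n}"
    then show "(e i (p i) has_real_derivative e' i (p i)) (at x)"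
      using assms permutes_in_image by fastforce
  qed
  have "(\<Sum>p\<in>?P. signof p * (\<Sum>i\<in>{0..<n}. e' i (p i) * (\<Prod>l\<in>{0..<n} - {i}. e l (p l) x)))
      = (\<Sum>p\<in>?P. \<Sum>i\<in>{0..<n}. signof p * (\<Prod>l=0..<n. (if l = i then e' l (p l) else e l (p l) x)))"
  proof (rule sum.cong[OF refl])
    fix p assume "p \<in> ?P"
    show "signof p * (\<Sum>i\<in>{0..<n}. e' i (p i) * (\<Prod>l\<in>{0..<n} - {i}. e l (p l) x))
      = (\<Sum>i\<in>{0..<n}. signof p * (\<Prod>l=0..<n. (if l = i then e' l (p l) else e l (p l) x)))"
      unfolding sum_distrib_left
    proof (rule sum.cong[OF refl])
      fix i assume i: "i \<in> {0..<n}"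
      have "(\<Prod>l=0..<n. (if l = i then e' l (p l) else e l (p l) x)) =
         (if i = i then e' i (p i) else e i (p i) x) * (\<Prod>l\<in>{0..<n} - {i}. (if l = i then e' l (p l) else e l (p l) x))"
        by (rule prod.remove) (use i in auto)
      also have "\<dots> = e' i (p i) * (\<Prod>l\<in>{0..<n} - {i}. e l (p l) x)"
        by (auto intro!: prod.cong)
      finally show "signof p * (e' i (p i) * (\<Prod>l\<in>{0..<n} - {i}. e l (p l) x)) =
          signof p * (\<Prod>l=0..<n. (if l = i then e' l (p l) else e l (p l) x))" by simp
    qed
  qed
  also have "\<dots> = (\<Sum>i\<in>{0..<n}. \<Sum>p\<in>?P. signof p * (\<Prod>l=0..<n. (if l = i then e' l (p l) else e l (p l) x)))"
    by (rule sum.swap)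
  also have "\<dots> = (\<Sum>i<n. Determinant.det (mat n n (\<lambda>(a,j). if a = i then e' a j else e a j x)))"
    by (simp add: det_mat_expand atLeast0LessThan)
  finally show ?thesis using D eq by simp
qed

lemma mat_eqI_sq: "(\<And>i j. i < m \<Longrightarrow> j < m \<Longrightarrow> f (i,j) = g (i,j)) \<Longrightarrow> mat m m f = mat m m g"
  by (rule eq_matI) auto

lemma det_last_col_unit:
  fixes Q :: "real mat"
  assumes Q: "Q \<in> carrier_mat (Suc m) (Suc m)"
    and c: "\<And>i. i < Suc m \<Longrightarrow> Q $$ (i, m) = (if i = m then d else 0)"
  shows "Determinant.det Q = d * Determinant.det (mat m m (\<lambda>(i,j). Q $$ (i,j)))"
proof -
  have "Determinant.det Q = (\<Sum>i<Suc m. Q $$ (i,m) * cofactor Q i m)"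
    by (rule laplace_expansion_column[OF Q]) simp
  also have "\<dots> = (\<Sum>i<Suc m. if i = m then d * cofactor Q m m else 0)"
    by (rule sum.cong) (auto simp: c)
  also have "\<dots> = d * cofactor Q m m" by simp
  also have "cofactor Q m m = Determinant.det (mat_delete Q m m)"
    by (simp add: cofactor_def)
  also have "mat_delete Q m m = mat m m (\<lambda>(i,j). Q $$ (i,j))"
    unfolding mat_delete_def using Q by (auto intro!: mat_eqI_sq)
  finally show ?thesis .
qed

lemma det_unit_cols:
  fixes B :: "real mat"
  assumes "B \<in> carrier_mat (n+2) (n+2)"
    and "\<And>i j. i < n+2 \<Longrightarrow> j < n \<Longrightarrow> B $$ (i,j) = (if i = j then 1 else 0)"
  shows "Determinant.det B = B$$(n,n) * B$$(n+1,n+1) - B$$(n,n+1) * B$$(n+1,n)"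
  using assms
proof (induction n arbitrary: B)
  case 0
  then have B: "B \<in> carrier_mat 2 2" by (simp add: numeral_2_eq_2)
  have "Determinant.det B = (\<Sum>i<2. B $$ (i,0) * cofactor B i 0)"
    by (rule laplace_expansion_column[OF B]) simp
  also have "\<dots> = B $$ (0,0) * cofactor B 0 0 + B $$ (1,0) * cofactor B 1 0"
    by (simp add: numeral_2_eq_2)
  also have "cofactor B 0 0 = B $$ (1,1)"
    unfolding cofactor_def using B
    by (subst det_single) (auto simp: mat_delete_def)
  also have "cofactor B 1 0 = - B $$ (0,1)"
    unfolding cofactor_def using B
    by (subst det_single) (auto simp: mat_delete_def)
  finally show ?case by simp
next
  case (Suc n)
  have B: "B \<in> carrier_mat (Suc (n+2)) (Suc (n+2))" using Suc.prems by simp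
  have "Determinant.det B = (\<Sum>i<Suc (n+2). B $$ (i,0) * cofactor B i 0)"
    by (rule laplace_expansion_column[OF B]) simp
  also have "\<dots> = (\<Sum>i<Suc (n+2). if i = 0 then cofactor B 0 0 else 0)"
    by (rule sum.cong) (auto simp: Suc.prems)
  also have "\<dots> = Determinant.det (mat_delete B 0 0)" by (simp add: cofactor_def)
  also have "\<dots> = mat_delete B 0 0 $$ (n,n) * mat_delete B 0 0 $$ (n+1,n+1)
      - mat_delete B 0 0 $$ (n,n+1) * mat_delete B 0 0 $$ (n+1,n)"
    by (rule Suc.IH) (use B in \<open>auto simp: mat_delete_def Suc.prems\<close>)
  also have "\<dots> = B$$(Suc n,Suc n) * B$$(Suc n+1,Suc n+1) - B$$(Suc n,Suc n+1) * B$$(Suc n+1,Suc n)"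
    using B by (simp add: mat_delete_def)
  finally show ?case .
qed

lemma desnanot_jacobi:
  fixes A :: "real mat"
  assumes A: "A \<in> carrier_mat (n+2) (n+2)" and d0: "Determinant.det A \<noteq> 0"
  shows "Determinant.det A * Determinant.det (mat n n (\<lambda>(i,j). A $$ (i,j))) =
    Determinant.det (mat_delete A n n) * Determinant.det (mat_delete A (n+1) (n+1))
    - Determinant.det (mat_delete A n (n+1)) * Determinant.det (mat_delete A (n+1) n)"
proof -
  define d where "d = Determinant.det A"
  define C where "C = adj_mat A"
  have C: "C \<in> carrier_mat (n+2) (n+2)" and AC: "A * C = d \<cdot>\<^sub>m 1\<^sub>m (n+2)"
    using adj_mat[OF A] by (auto simp: C_def d_def)
  define B where "B = mat (n+2) (n+2) (\<lambda>(i,j). if j < n then (if i = j then 1 else 0) else C $$ (i,j))"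
  have Bc: "B \<in> carrier_mat (n+2) (n+2)" by (simp add: B_def)
  have AB1: "(A * B) $$ (i,j) = (if i = j then d else 0)" if "i < n+2" "j < n+2" "\<not> j < n" for i j
  proof -
    have "(A * B) $$ (i,j) = (A * C) $$ (i,j)"
      using that A C by (simp add: B_def scalar_prod_def)
    also have "\<dots> = (if i = j then d else 0)" using that by (simp add: AC)
    finally show ?thesis .
  qed
  have AB2: "(A * B) $$ (i,j) = A $$ (i,j)" if "i < n+2" "j < n" for i j
  proof -
    have "(A * B) $$ (i,j) = (\<Sum>k\<in>{0..<n+2}. A $$ (i,k) * (if k = j then 1 else 0))"
      using that A by (simp add: B_def scalar_prod_def cong: if_cong)
    also have "\<dots> = A $$ (i,j)" using that by (simp add: if_distrib cong: if_cong)
    finally show ?thesis .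
  qed
  have ABc: "A * B \<in> carrier_mat (Suc (Suc n)) (Suc (Suc n))" using A Bc by auto
  have "Determinant.det (A * B) = d * Determinant.det (mat (Suc n) (Suc n) (\<lambda>(i,j). (A*B) $$ (i,j)))"
    by (rule det_last_col_unit[OF ABc]) (auto simp: AB1)
  also have "Determinant.det (mat (Suc n) (Suc n) (\<lambda>(i,j). (A*B) $$ (i,j)))
     = d * Determinant.det (mat n n (\<lambda>(i,j). mat (Suc n) (Suc n) (\<lambda>(i,j). (A*B) $$ (i,j)) $$ (i,j)))"
    by (rule det_last_col_unit) (auto simp: AB1)
  also have "mat n n (\<lambda>(i,j). mat (Suc n) (Suc n) (\<lambda>(i,j). (A*B) $$ (i,j)) $$ (i,j))
     = mat n n (\<lambda>(i,j). A $$ (i,j))"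
    by (rule mat_eqI_sq) (auto simp: AB2)
  finally have e1: "Determinant.det (A * B) = d * (d * Determinant.det (mat n n (\<lambda>(i,j). A $$ (i,j))))" .
  have e2: "Determinant.det (A * B) = d * Determinant.det B"
    using det_mult[OF A Bc] by (simp add: d_def)
  have e3: "Determinant.det B = B$$(n,n) * B$$(n+1,n+1) - B$$(n,n+1) * B$$(n+1,n)"
    by (rule det_unit_cols[OF Bc]) (auto simp: B_def)
  have Cij: "C $$ (i,j) = cofactor A j i" if "i < n+2" "j < n+2" for i j
    using that A by (simp add: C_def adj_mat_def)
  have e4: "Determinant.det B = Determinant.det (mat_delete A n n) * Determinant.det (mat_delete A (n+1) (n+1))
    - Determinant.det (mat_delete A n (n+1)) * Determinant.det (mat_delete A (n+1) n)"
    unfolding e3 by (simp add: B_def Cij cofactor_def)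
  from e1 e2 d0 have "Determinant.det B = d * Determinant.det (mat n n (\<lambda>(i,j). A $$ (i,j)))"
    by (simp add: d_def)
  with e4 show ?thesis by (simp add: d_def)
qed

definition Hk :: "(nat \<Rightarrow> real \<Rightarrow> real) \<Rightarrow> nat \<Rightarrow> (nat \<Rightarrow> nat) \<Rightarrow> (nat \<Rightarrow> nat) \<Rightarrow> real \<Rightarrow> real" where
  "Hk mm k r c s = Determinant.det (mat k k (\<lambda>(i,j). mm (r i + c j) s))"

definition sh :: "nat \<Rightarrow> nat \<Rightarrow> nat" where
  "sh n i = (if i < n then i else Suc i)"

lemma Hk_cong: "(\<And>i. i < k \<Longrightarrow> r i = r' i) \<Longrightarrow> (\<And>i. i < k \<Longrightarrow> c i = c' i) \<Longrightarrow> Hk mm k r c s = Hk mm k r' c' s"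
  unfolding Hk_def by (rule arg_cong[where f = Determinant.det], rule mat_eqI_sq) auto

lemma Hk_transpose: "Hk mm k r c s = Hk mm k c r s"
proof -
  have "Hk mm k r c s = Determinant.det (transpose_mat (mat k k (\<lambda>(i,j). mm (r i + c j) s)))"
    unfolding Hk_def by (rule det_transpose[symmetric]) (rule mat_carrier)
  also have "transpose_mat (mat k k (\<lambda>(i,j). mm (r i + c j) s)) = mat k k (\<lambda>(i,j). mm (c i + r j) s)"
    by (rule eq_matI) (auto simp: add.commute)
  finally show ?thesis unfolding Hk_def .
qed

lemma Hk_eq_rows: "i < k \<Longrightarrow> i' < k \<Longrightarrow> i \<noteq> i' \<Longrightarrow> r i = r i' \<Longrightarrow> Hk mm k r c s = 0"
  unfolding Hk_def
  by (rule det_identical_rows[where n=k and i=i and j=i']) (auto intro!: eq_vecI)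

lemma Hk_deriv_rows:
  assumes "\<And>p. (mm p has_real_derivative mm (Suc p) x) (at x)"
  shows "((\<lambda>s. Hk mm k r c s) has_real_derivative (\<Sum>i<k. Hk mm k (r(i := Suc (r i))) c x)) (at x)"
proof -
  have "((\<lambda>s. Determinant.det (mat k k (\<lambda>(i,j). mm (r i + c j) s))) has_real_derivative
     (\<Sum>i<k. Determinant.det (mat k k (\<lambda>(a,j). if a = i then mm (Suc (r a + c j)) x else mm (r a + c j) x)))) (at x)"
    by (rule det_has_deriv[where e = "\<lambda>i j. mm (r i + c j)"]) (rule assms)
  also have "(\<lambda>i. Determinant.det (mat k k (\<lambda>(a,j). if a = i then mm (Suc (r a + c j)) x else mm (r a + c j) x)))
     = (\<lambda>i. Hk mm k (r(i := Suc (r i))) c x)"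
    unfolding Hk_def by (intro ext arg_cong[where f = Determinant.det] mat_eqI_sq) auto
  finally show ?thesis unfolding Hk_def .
qed

lemma Hk_deriv_cols:
  assumes "\<And>p. (mm p has_real_derivative mm (Suc p) x) (at x)"
  shows "((\<lambda>s. Hk mm k r c s) has_real_derivative (\<Sum>j<k. Hk mm k r (c(j := Suc (c j))) x)) (at x)"
  using Hk_deriv_rows[of mm x k c r, OF assms] by (simp add: Hk_transpose)

lemma Hk_D1:
  assumes "\<And>p. (mm p has_real_derivative mm (Suc p) x) (at x)"
  shows "((\<lambda>s. Hk mm (Suc n) (\<lambda>i. i) (\<lambda>i. i) s) has_real_derivative Hk mm (Suc n) (sh n) (\<lambda>i. i) x) (at x)"
proof -
  have "(\<Sum>i<Suc n. Hk mm (Suc n) ((\<lambda>i. i)(i := Suc i)) (\<lambda>i. i) x) = Hk mm (Suc n) (sh n) (\<lambda>i. i) x"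
  proof -
    have "(\<Sum>i<Suc n. Hk mm (Suc n) ((\<lambda>i. i)(i := Suc i)) (\<lambda>i. i) x)
       = (\<Sum>i<n. Hk mm (Suc n) ((\<lambda>i. i)(i := Suc i)) (\<lambda>i. i) x) + Hk mm (Suc n) ((\<lambda>i. i)(n := Suc n)) (\<lambda>i. i) x"
      by simp
    also have "(\<Sum>i<n. Hk mm (Suc n) ((\<lambda>i. i)(i := Suc i)) (\<lambda>i. i) x) = 0"
    proof (rule sum.neutral, safe)
      fix i assume "i < n"
      then show "Hk mm (Suc n) ((\<lambda>i. i)(i := Suc i)) (\<lambda>i. i) x = 0"
        by (intro Hk_eq_rows[where i=i and i'="Suc i"]) auto
    qed
    also have "Hk mm (Suc n) ((\<lambda>i. i)(n := Suc n)) (\<lambda>i. i) x = Hk mm (Suc n) (sh n) (\<lambda>i. i) x"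
      by (rule Hk_cong) (auto simp: sh_def)
    finally show ?thesis by linarith
  qed
  then show ?thesis using Hk_deriv_rows[of mm x "Suc n" "\<lambda>i. i" "\<lambda>i. i", OF assms] by simp
qed

lemma Hk_D2:
  assumes "\<And>p. (mm p has_real_derivative mm (Suc p) x) (at x)"
  shows "((\<lambda>s. Hk mm (Suc n) (sh n) (\<lambda>i. i) s) has_real_derivative Hk mm (Suc n) (sh n) (sh n) x) (at x)"
proof -
  have "(\<Sum>i<Suc n. Hk mm (Suc n) (sh n) ((\<lambda>i. i)(i := Suc i)) x) = Hk mm (Suc n) (sh n) (sh n) x"
  proof -
    have "(\<Sum>i<Suc n. Hk mm (Suc n) (sh n) ((\<lambda>i. i)(i := Suc i)) x)
       = (\<Sum>i<n. Hk mm (Suc n) (sh n) ((\<lambda>i. i)(i := Suc i)) x) + Hk mm (Suc n) (sh n) ((\<lambda>i. i)(n := Suc n)) x"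
      by simp
    also have "(\<Sum>i<n. Hk mm (Suc n) (sh n) ((\<lambda>i. i)(i := Suc i)) x) = 0"
    proof (rule sum.neutral, safe)
      fix i assume "i < n"
      then show "Hk mm (Suc n) (sh n) ((\<lambda>i. i)(i := Suc i)) x = 0"
        by (subst Hk_transpose, intro Hk_eq_rows[where i=i and i'="Suc i"]) auto
    qed
    also have "Hk mm (Suc n) (sh n) ((\<lambda>i. i)(n := Suc n)) x = Hk mm (Suc n) (sh n) (sh n) x"
      by (rule Hk_cong) (auto simp: sh_def)
    finally show ?thesis by linarith
  qed
  then show ?thesis using Hk_deriv_cols[of mm x "Suc n" "sh n" "\<lambda>i. i", OF assms] by simp
qed

lemma Hk_DJ:
  assumes "Hk mm (n+2) (\<lambda>i. i) (\<lambda>i. i) x \<noteq> 0"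
  shows "Hk mm (n+2) (\<lambda>i. i) (\<lambda>i. i) x * Hk mm n (\<lambda>i. i) (\<lambda>i. i) x =
    Hk mm (Suc n) (sh n) (sh n) x * Hk mm (Suc n) (\<lambda>i. i) (\<lambda>i. i) x - (Hk mm (Suc n) (sh n) (\<lambda>i. i) x)^2"
proof -
  define A where "A = mat (n+2) (n+2) (\<lambda>(i,j). mm (i + j) x)"
  have A: "A \<in> carrier_mat (n+2) (n+2)" by (simp add: A_def)
  have dA: "Determinant.det A = Hk mm (n+2) (\<lambda>i. i) (\<lambda>i. i) x" by (simp add: A_def Hk_def)
  have 1: "mat n n (\<lambda>(i,j). A $$ (i,j)) = mat n n (\<lambda>(i,j). mm (i + j) x)"
    by (rule mat_eqI_sq) (auto simp: A_def)
  have 2: "mat_delete A n n = mat (Suc n) (Suc n) (\<lambda>(i,j). mm (sh n i + sh n j) x)"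
    by (rule eq_matI) (auto simp: A_def mat_delete_def sh_def)
  have 3: "mat_delete A (n+1) (n+1) = mat (Suc n) (Suc n) (\<lambda>(i,j). mm (i + j) x)"
    by (rule eq_matI) (auto simp: A_def mat_delete_def)
  have 4: "mat_delete A n (n+1) = mat (Suc n) (Suc n) (\<lambda>(i,j). mm (sh n i + j) x)"
    by (rule eq_matI) (auto simp: A_def mat_delete_def sh_def)
  have 5: "mat_delete A (n+1) n = mat (Suc n) (Suc n) (\<lambda>(i,j). mm (i + sh n j) x)"
    by (rule eq_matI) (auto simp: A_def mat_delete_def sh_def)
  have "Determinant.det A * Determinant.det (mat n n (\<lambda>(i,j). A $$ (i,j))) =
    Determinant.det (mat_delete A n n) * Determinant.det (mat_delete A (n+1) (n+1))
    - Determinant.det (mat_delete A n (n+1)) * Determinant.det (mat_delete A (n+1) n)"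
    by (rule desnanot_jacobi[OF A]) (use assms dA in simp)
  then have "Hk mm (n+2) (\<lambda>i. i) (\<lambda>i. i) x * Hk mm n (\<lambda>i. i) (\<lambda>i. i) x =
    Hk mm (Suc n) (sh n) (sh n) x * Hk mm (Suc n) (\<lambda>i. i) (\<lambda>i. i) x - Hk mm (Suc n) (sh n) (\<lambda>i. i) x * Hk mm (Suc n) (\<lambda>i. i) (sh n) x"
    unfolding dA 1 2 3 4 5 by (simp add: Hk_def)
  then show ?thesis by (simp add: Hk_transpose[of mm "Suc n" "\<lambda>i. i" "sh n"] power2_eq_square)
qed

lemma pow_le_exp:
  fixes y :: real
  assumes "0 \<le> y"
  shows "y ^ q / fact q \<le> exp y"
proof -
  have s: "(\<lambda>n. y ^ n /\<^sub>R fact n) sums exp y" by (rule exp_converges)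
  have "(\<Sum>n\<in>{q}. y ^ n /\<^sub>R fact n) \<le> (\<Sum>n. y ^ n /\<^sub>R fact n)"
    by (rule sum_le_suminf) (use s assms in \<open>auto simp: sums_iff\<close>)
  then show ?thesis using s by (simp add: sums_iff divide_inverse mult.commute)
qed

lemma pow_exp_bound:
  fixes x u t \<delta> :: real
  assumes d: "0 < \<delta>" and ut: "\<bar>u - t\<bar> \<le> \<delta>"
  shows "\<bar>x ^ q * exp (u * x)\<bar> \<le> fact q / \<delta> ^ q * (exp ((t + 2 * \<delta>) * x) + exp ((t - 2 * \<delta>) * x))"
proof -
  have "(\<delta> * \<bar>x\<bar>) ^ q / fact q \<le> exp (\<delta> * \<bar>x\<bar>)"
    by (rule pow_le_exp) (use d in simp)
  then have 1: "\<bar>x\<bar> ^ q \<le> fact q / \<delta> ^ q * exp (\<delta> * \<bar>x\<bar>)"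
    using d by (simp add: power_mult_distrib field_simps)
  have 2: "exp (u * x) * exp (\<delta> * \<bar>x\<bar>) \<le> exp ((t + 2 * \<delta>) * x) + exp ((t - 2 * \<delta>) * x)"
  proof (cases "x \<ge> 0")
    case True
    have "0 \<le> (t + \<delta> - u) * x" using True ut by simp
    moreover have "(t + 2 * \<delta>) * x - (u * x + \<delta> * \<bar>x\<bar>) = (t + \<delta> - u) * x"
      using True by (simp add: algebra_simps)
    ultimately have "u * x + \<delta> * \<bar>x\<bar> \<le> (t + 2 * \<delta>) * x" by linarith
    then have "exp (u * x) * exp (\<delta> * \<bar>x\<bar>) \<le> exp ((t + 2 * \<delta>) * x)"
      by (simp add: exp_add[symmetric])
    then show ?thesis using exp_gt_zero[of "(t - 2 * \<delta>) * x"] exp_gt_zero[of "(t + 2 * \<delta>) * x"] by linarith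
  next
    case False
    have "0 \<le> (u - \<delta> - (t - 2 * \<delta>)) * (- x)" using False ut by (intro mult_nonneg_nonneg) (auto simp: abs_le_iff)
    moreover have "(t - 2 * \<delta>) * x - (u * x + \<delta> * \<bar>x\<bar>) = (u - \<delta> - (t - 2 * \<delta>)) * (- x)"
      using False by (simp add: algebra_simps)
    ultimately have "u * x + \<delta> * \<bar>x\<bar> \<le> (t - 2 * \<delta>) * x" by linarith
    then have "exp (u * x) * exp (\<delta> * \<bar>x\<bar>) \<le> exp ((t - 2 * \<delta>) * x)"
      by (simp add: exp_add[symmetric])
    then show ?thesis using exp_gt_zero[of "(t - 2 * \<delta>) * x"] exp_gt_zero[of "(t + 2 * \<delta>) * x"] by linarith
  qed
  have "\<bar>x ^ q * exp (u * x)\<bar> = \<bar>x\<bar> ^ q * exp (u * x)" by (simp add: abs_mult power_abs)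
  also have "\<dots> \<le> fact q / \<delta> ^ q * exp (\<delta> * \<bar>x\<bar>) * exp (u * x)"
    by (rule mult_right_mono[OF 1]) simp
  also have "\<dots> = fact q / \<delta> ^ q * (exp (u * x) * exp (\<delta> * \<bar>x\<bar>))" by simp
  also have "\<dots> \<le> fact q / \<delta> ^ q * (exp ((t + 2 * \<delta>) * x) + exp ((t - 2 * \<delta>) * x))"
    by (rule mult_left_mono[OF 2]) (use d in simp)
  finally show ?thesis .
qed

lemma lipschitz_from_deriv:
  fixes g g' :: "real \<Rightarrow> real"
  assumes "\<And>s. s \<in> ball t \<delta> \<Longrightarrow> (g has_real_derivative g' s) (at s)"
    and "\<And>s. s \<in> ball t \<delta> \<Longrightarrow> \<bar>g' s\<bar> \<le> B"
    and "s \<in> ball t \<delta>"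
  shows "\<bar>g s - g t\<bar> \<le> B * \<bar>s - t\<bar>"
proof -
  have t: "t \<in> ball t \<delta>" using assms(3) by (auto simp: dist_norm)
  have inb: "z \<in> ball t \<delta>" if "min s t \<le> z" "z \<le> max s t" for z
    using that assms(3) by (auto simp: dist_norm)
  consider "s < t" | "s = t" | "t < s" by linarith
  then show ?thesis
  proof cases
    case 1
    obtain z where z: "s < z" "z < t" "g t - g s = (t - s) * g' z"
      using MVT2[OF 1, of g g'] assms(1) inb 1 by force
    have "\<bar>g' z\<bar> \<le> B" using assms(2) inb z by simp
    have e: "g s - g t = - ((t - s) * g' z)" using z(3) by linarith
    have "\<bar>g s - g t\<bar> = \<bar>g' z\<bar> * (t - s)" unfolding e using 1 by (simp add: abs_mult)
    also have "\<dots> \<le> B * (t - s)" by (rule mult_right_mono) (use \<open>\<bar>g' z\<bar> \<le> B\<close> 1 in auto)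
    finally show ?thesis using 1 by simp
  next
    case 2 then show ?thesis by simp
  next
    case 3
    obtain z where z: "t < z" "z < s" "g s - g t = (s - t) * g' z"
      using MVT2[OF 3, of g g'] assms(1) inb 3 by force
    have "\<bar>g' z\<bar> \<le> B" using assms(2) inb z by simp
    have "\<bar>g s - g t\<bar> = \<bar>g' z\<bar> * (s - t)" using z 3 by (simp add: abs_mult)
    also have "\<dots> \<le> B * (s - t)" by (rule mult_right_mono) (use \<open>\<bar>g' z\<bar> \<le> B\<close> 3 in auto)
    finally show ?thesis using 3 by simp
  qed
qed

lemma DUI:
  fixes f f' :: "real \<Rightarrow> 'a \<Rightarrow> real"
  assumes d: "0 < \<delta>"
    and intf: "\<And>s. s \<in> ball t \<delta> \<Longrightarrow> integrable M (f s)"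
    and der: "\<And>s x. s \<in> ball t \<delta> \<Longrightarrow> x \<in> space M \<Longrightarrow> ((\<lambda>s. f s x) has_real_derivative f' s x) (at s)"
    and bnd: "\<And>s x. s \<in> ball t \<delta> \<Longrightarrow> x \<in> space M \<Longrightarrow> \<bar>f' s x\<bar> \<le> w x"
    and w: "integrable M w"
    and meas: "f' t \<in> borel_measurable M"
  shows "((\<lambda>s. \<integral>x. f s x \<partial>M) has_real_derivative (\<integral>x. f' t x \<partial>M)) (at t)"
proof -
  have t: "t \<in> ball t \<delta>" using d by simp
  have lip: "\<bar>f s x - f t x\<bar> \<le> w x * \<bar>s - t\<bar>" if "s \<in> ball t \<delta>" "x \<in> space M" for s x
    by (rule lipschitz_from_deriv[where g = "\<lambda>s. f s x" and g' = "\<lambda>s. f' s x"])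
       (use der bnd that in auto)
  have "((\<lambda>h. ((\<integral>x. f h x \<partial>M) - (\<integral>x. f t x \<partial>M)) / (h - t)) \<longlongrightarrow> (\<integral>x. f' t x \<partial>M)) (at t within ball t \<delta>)"
    unfolding tendsto_at_iff_sequentially
  proof (intro allI impI)
    fix X :: "nat \<Rightarrow> real"
    assume X: "\<forall>i. X i \<in> ball t \<delta> - {t}" and Xt: "X \<longlonglongrightarrow> t"
    have Xat: "filterlim X (at t) sequentially"
      using X Xt by (auto simp: filterlim_at)
    define q where "q i x = (f (X i) x - f t x) / (X i - t)" for i x
    have qint: "integrable M (q i)" for i
      unfolding q_def using intf X t by auto
    have eq: "((\<lambda>h. ((\<integral>x. f h x \<partial>M) - (\<integral>x. f t x \<partial>M)) / (h - t)) \<circ> X) i = (\<integral>x. q i x \<partial>M)" for i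
      unfolding q_def o_def using intf X t by (simp add: integral_diff)
    have "(\<lambda>i. \<integral>x. q i x \<partial>M) \<longlonglongrightarrow> (\<integral>x. f' t x \<partial>M)"
    proof (rule integral_dominated_convergence[where w = w])
      show "f' t \<in> borel_measurable M" by (rule meas)
      show "q i \<in> borel_measurable M" for i using qint by auto
      show "integrable M w" by (rule w)
      show "AE x in M. (\<lambda>i. q i x) \<longlonglongrightarrow> f' t x"
      proof (rule AE_I2)
        fix x assume x: "x \<in> space M"
        have "((\<lambda>h. (f h x - f t x) / (h - t)) \<longlongrightarrow> f' t x) (at t)"
          using der[OF t x] by (simp add: has_field_derivative_iff)
        from filterlim_compose[OF this Xat] show "(\<lambda>i. q i x) \<longlonglongrightarrow> f' t x"
          unfolding q_def .
      qed
      show "AE x in M. norm (q i x) \<le> w x" for i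
      proof (rule AE_I2)
        fix x assume x: "x \<in> space M"
        have ne: "X i - t \<noteq> 0" using X by auto
        have "\<bar>f (X i) x - f t x\<bar> \<le> w x * \<bar>X i - t\<bar>" using lip X x by auto
        then show "norm (q i x) \<le> w x" unfolding q_def using ne
          by (simp add: abs_divide divide_le_eq)
      qed
    qed
    then show "((\<lambda>h. ((\<integral>x. f h x \<partial>M) - (\<integral>x. f t x \<partial>M)) / (h - t)) \<circ> X) \<longlonglongrightarrow> (\<integral>x. f' t x \<partial>M)"
      unfolding eq .
  qed
  then have "((\<lambda>h. ((\<integral>x. f h x \<partial>M) - (\<integral>x. f t x \<partial>M)) / (h - t)) \<longlongrightarrow> (\<integral>x. f' t x \<partial>M)) (at t)"
    using at_within_open[OF t open_ball] by simp
  then show ?thesis by (simp add: has_field_derivative_iff)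
qed

locale mgfset =
  fixes N :: real and \<rho> :: "real measure" and J :: "real set"
  assumes N_pos: "N > 0" and borel: "sets \<rho> = sets borel"
    and inf_supp: "infinite (measure_support \<rho>)"
    and J_open: "open J" and finite_mgf: "\<forall>s\<in>J. integrable \<rho> (\<lambda>\<epsilon>. exp (s * N * \<epsilon>))"
begin

definition mom :: "nat \<Rightarrow> real \<Rightarrow> real" where
  "mom p s = (\<integral>\<epsilon>. (N * \<epsilon>) ^ p * exp (s * N * \<epsilon>) \<partial>\<rho>)"

lemma space_rho: "space \<rho> = UNIV"
  using sets_eq_imp_space_eq[OF borel] by simp

lemma meas_rho: "f \<in> borel_measurable borel \<Longrightarrow> f \<in> borel_measurable \<rho>"
  using measurable_cong_sets[OF borel, of borel borel] by metis

lemma J_delta: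
  assumes "s \<in> J"
  obtains \<delta> where "\<delta> > 0" "ball s (3 * \<delta>) \<subseteq> J"
proof -
  obtain e where e: "e > 0" "ball s e \<subseteq> J" using J_open assms open_contains_ball by blast
  show ?thesis by (rule that[of "e / 3"]) (use e in auto)
qed

lemma weight_int:
  assumes "\<delta> > 0" "ball s (3 * \<delta>) \<subseteq> J"
  shows "integrable \<rho> (\<lambda>\<epsilon>. C * (exp ((s + 2 * \<delta>) * (N * \<epsilon>)) + exp ((s - 2 * \<delta>) * (N * \<epsilon>))))"
proof -
  have "s + 2 * \<delta> \<in> J" "s - 2 * \<delta> \<in> J" using assms by (auto simp: subset_iff dist_real_def)
  then have "integrable \<rho> (\<lambda>\<epsilon>. exp ((s + 2 * \<delta>) * N * \<epsilon>))" "integrable \<rho> (\<lambda>\<epsilon>. exp ((s - 2 * \<delta>) * N * \<epsilon>))"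
    using finite_mgf by auto
  then show ?thesis by (simp add: mult.assoc)
qed

lemma mom_bound:
  assumes "\<delta> > 0" "\<bar>u - s\<bar> \<le> \<delta>"
  shows "\<bar>(N * \<epsilon>) ^ p * exp (u * N * \<epsilon>)\<bar> \<le> fact p / \<delta> ^ p * (exp ((s + 2 * \<delta>) * (N * \<epsilon>)) + exp ((s - 2 * \<delta>) * (N * \<epsilon>)))"
  using pow_exp_bound[OF assms, of "N * \<epsilon>" p] by (simp add: mult.assoc)

lemma mom_meas: "(\<lambda>\<epsilon>. (N * \<epsilon>) ^ p * exp (u * N * \<epsilon>)) \<in> borel_measurable \<rho>"
  by (rule meas_rho) measurable

lemma mom_int:
  assumes "s \<in> J"
  shows "integrable \<rho> (\<lambda>\<epsilon>. (N * \<epsilon>) ^ p * exp (s * N * \<epsilon>))"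
proof -
  obtain \<delta> where d: "\<delta> > 0" "ball s (3 * \<delta>) \<subseteq> J" using J_delta[OF assms] by blast
  show ?thesis
  proof (rule Bochner_Integration.integrable_bound[OF weight_int[OF d, of "fact p / \<delta> ^ p"] mom_meas], rule AE_I2)
    fix \<epsilon>
    have "\<bar>(N * \<epsilon>) ^ p * exp (s * N * \<epsilon>)\<bar> \<le> fact p / \<delta> ^ p * (exp ((s + 2 * \<delta>) * (N * \<epsilon>)) + exp ((s - 2 * \<delta>) * (N * \<epsilon>)))"
      by (rule mom_bound) (use d in auto)
    also have "\<dots> \<le> \<bar>fact p / \<delta> ^ p * (exp ((s + 2 * \<delta>) * (N * \<epsilon>)) + exp ((s - 2 * \<delta>) * (N * \<epsilon>)))\<bar>"
      by (rule abs_ge_self)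
    finally show "norm ((N * \<epsilon>) ^ p * exp (s * N * \<epsilon>)) \<le> norm (fact p / \<delta> ^ p * (exp ((s + 2 * \<delta>) * (N * \<epsilon>)) + exp ((s - 2 * \<delta>) * (N * \<epsilon>))))"
      by simp
  qed
qed

lemma mom_deriv:
  assumes "s \<in> J"
  shows "(mom p has_real_derivative mom (Suc p) s) (at s)"
proof -
  obtain \<delta> where d: "\<delta> > 0" "ball s (3 * \<delta>) \<subseteq> J" using J_delta[OF assms] by blast
  have bJ: "ball s \<delta> \<subseteq> J" using d by (auto simp: subset_iff dist_real_def)
  have eq: "mom p = (\<lambda>u. \<integral>\<epsilon>. (N * \<epsilon>) ^ p * exp (u * N * \<epsilon>) \<partial>\<rho>)" by (rule ext) (simp add: mom_def)
  have "((\<lambda>u. \<integral>\<epsilon>. (N * \<epsilon>) ^ p * exp (u * N * \<epsilon>) \<partial>\<rho>) has_real_derivative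
      (\<integral>\<epsilon>. (N * \<epsilon>) ^ Suc p * exp (s * N * \<epsilon>) \<partial>\<rho>)) (at s)"
  proof (rule DUI[where \<delta> = \<delta> and w = "\<lambda>\<epsilon>. fact (Suc p) / \<delta> ^ Suc p * (exp ((s + 2 * \<delta>) * (N * \<epsilon>)) + exp ((s - 2 * \<delta>) * (N * \<epsilon>)))"])
    show "0 < \<delta>" by (rule d)
    show "integrable \<rho> (\<lambda>\<epsilon>. (N * \<epsilon>) ^ p * exp (u * N * \<epsilon>))" if "u \<in> ball s \<delta>" for u
      using mom_int bJ that by auto
    show "((\<lambda>u. (N * \<epsilon>) ^ p * exp (u * N * \<epsilon>)) has_real_derivative (N * \<epsilon>) ^ Suc p * exp (u * N * \<epsilon>)) (at u)" for u \<epsilon>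
      by (auto intro!: derivative_eq_intros simp: algebra_simps)
    show "\<bar>(N * \<epsilon>) ^ Suc p * exp (u * N * \<epsilon>)\<bar> \<le> fact (Suc p) / \<delta> ^ Suc p * (exp ((s + 2 * \<delta>) * (N * \<epsilon>)) + exp ((s - 2 * \<delta>) * (N * \<epsilon>)))"
      if "u \<in> ball s \<delta>" for u \<epsilon>
      by (rule mom_bound) (use that d in \<open>auto simp: dist_real_def\<close>)
    show "integrable \<rho> (\<lambda>\<epsilon>. fact (Suc p) / \<delta> ^ Suc p * (exp ((s + 2 * \<delta>) * (N * \<epsilon>)) + exp ((s - 2 * \<delta>) * (N * \<epsilon>))))"
      by (rule weight_int[OF d])
    show "(\<lambda>\<epsilon>. (N * \<epsilon>) ^ Suc p * exp (s * N * \<epsilon>)) \<in> borel_measurable \<rho>" by (rule mom_meas)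
  qed
  then show ?thesis unfolding eq by (simp add: mom_def)
qed

lemma deriv_iter:
  assumes "s \<in> J"
  shows "(deriv ^^ p) (mgf N \<rho>) s = mom p s"
  using assms
proof (induction p arbitrary: s)
  case 0
  then show ?case by (simp add: mgf_def mom_def)
next
  case (Suc p)
  have ev: "\<forall>\<^sub>F x in nhds s. (deriv ^^ p) (mgf N \<rho>) x = mom p x"
    using eventually_nhds_in_open[OF J_open Suc.prems] by (rule eventually_mono) (rule Suc.IH)
  have "(deriv ^^ Suc p) (mgf N \<rho>) s = deriv ((deriv ^^ p) (mgf N \<rho>)) s" by simp
  also have "\<dots> = deriv (mom p) s" by (rule deriv_cong_ev[OF ev refl])
  also have "\<dots> = mom (Suc p) s" by (rule DERIV_imp_deriv[OF mom_deriv[OF Suc.prems]])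
  finally show ?case .
qed

end

context mgfset
begin

lemma quad_pos:
  assumes s: "s \<in> J" and c: "i0 < k" "c i0 \<noteq> 0"
  shows "(\<Sum>i<k. \<Sum>j<k. c i * c j * mom (i + j) s) > 0"
proof -
  define P where "P \<epsilon> = (\<Sum>i<k. c i * (N * \<epsilon>) ^ i)" for \<epsilon>
  define g where "g \<epsilon> = (P \<epsilon>)\<^sup>2 * exp (s * N * \<epsilon>)" for \<epsilon>
  have gexp: "g = (\<lambda>\<epsilon>. \<Sum>i<k. \<Sum>j<k. c i * c j * ((N * \<epsilon>) ^ (i + j) * exp (s * N * \<epsilon>)))"
  proof
    fix \<epsilon>
    have "g \<epsilon> = (\<Sum>i<k. \<Sum>j<k. (c i * (N * \<epsilon>) ^ i) * (c j * (N * \<epsilon>) ^ j)) * exp (s * N * \<epsilon>)"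
      unfolding g_def P_def power2_eq_square by (simp only: sum_product)
    also have "\<dots> = (\<Sum>i<k. \<Sum>j<k. (c i * (N * \<epsilon>) ^ i) * (c j * (N * \<epsilon>) ^ j) * exp (s * N * \<epsilon>))"
      by (simp add: sum_distrib_right)
    also have "\<dots> = (\<Sum>i<k. \<Sum>j<k. c i * c j * ((N * \<epsilon>) ^ (i + j) * exp (s * N * \<epsilon>)))"
      by (intro sum.cong refl) (simp add: power_add mult_ac)
    finally show "g \<epsilon> = (\<Sum>i<k. \<Sum>j<k. c i * c j * ((N * \<epsilon>) ^ (i + j) * exp (s * N * \<epsilon>)))" .
  qed
  have intg: "integrable \<rho> g"
    unfolding gexp by (intro Bochner_Integration.integrable_sum Bochner_Integration.integrable_mult_right mom_int[OF s])
  have intval: "(\<integral>\<epsilon>. g \<epsilon> \<partial>\<rho>) = (\<Sum>i<k. \<Sum>j<k. c i * c j * mom (i + j) s)"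
    unfolding gexp mom_def
    by (simp add: integral_sum' mom_int[OF s] integrable_sum)
  have gnn: "0 \<le> g \<epsilon>" for \<epsilon> unfolding g_def by simp
  have ge0: "0 \<le> (\<integral>\<epsilon>. g \<epsilon> \<partial>\<rho>)" by (rule integral_nonneg_AE) (simp add: gnn)
  have "(\<integral>\<epsilon>. g \<epsilon> \<partial>\<rho>) \<noteq> 0"
  proof
    assume "(\<integral>\<epsilon>. g \<epsilon> \<partial>\<rho>) = 0"
    then have AEg: "AE \<epsilon> in \<rho>. g \<epsilon> = 0"
      using integral_nonneg_eq_0_iff_AE[OF intg] gnn by simp
    have k0: "k = Suc (k - 1)" using c by simp
    have Peq: "P \<epsilon> = (\<Sum>i\<le>k - 1. (c i * N ^ i) * \<epsilon> ^ i)" for \<epsilon>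
      unfolding P_def by (subst k0, subst lessThan_Suc_atMost) (simp add: power_mult_distrib mult_ac)
    have "finite {z. (\<Sum>i\<le>k - 1. (c i * N ^ i) * z ^ i) = 0}"
      by (rule polyfun_roots_finite[where k = i0]) (use c N_pos in auto)
    then have Zfin: "finite {z. P z = 0}" by (simp add: Peq)
    have "infinite (measure_support \<rho> - {z. P z = 0})"
      using Diff_infinite_finite[OF Zfin inf_supp] .
    then obtain x0 where x0: "x0 \<in> measure_support \<rho>" "P x0 \<noteq> 0"
      using infinite_imp_nonempty by blast
    have "open (- {z. P z = 0})" using finite_imp_closed[OF Zfin] by (simp add: open_Compl)
    then obtain e where e: "e > 0" "ball x0 e \<subseteq> - {z. P z = 0}"
      using x0(2) open_contains_ball by blast
    have pos: "emeasure \<rho> (ball x0 e) > 0" using x0(1) e(1) by (simp add: measure_support_def)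
    have "AE \<epsilon> in \<rho>. \<not> (\<epsilon> \<in> ball x0 e)"
      using AEg
    proof (rule AE_mp, intro AE_I2 impI)
      fix \<epsilon> assume "g \<epsilon> = 0"
      then have "P \<epsilon> = 0" unfolding g_def by simp
      then show "\<epsilon> \<notin> ball x0 e" using e(2) by auto
    qed
    from emeasure_eq_0_AE[OF this] have "emeasure \<rho> (ball x0 e) = 0" by (simp add: space_rho ball_def)
    with pos show False by simp
  qed
  with ge0 intval show ?thesis by simp
qed

lemma hankel_pos:
  assumes s: "s \<in> J"
  shows "Hk mom k (\<lambda>i. i) (\<lambda>i. i) s > 0"
proof -
  define A where "A l = mat k k (\<lambda>(i,j). (if i = j then 1 else 0) * (1 - l) + l * mom (i + j) s)" for l :: real
  have A1: "Determinant.det (A 1) = Hk mom k (\<lambda>i. i) (\<lambda>i. i) s"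
    unfolding A_def Hk_def by simp
  have "A 0 = 1\<^sub>m k" unfolding A_def by (rule eq_matI) auto
  then have A0: "Determinant.det (A 0) = 1" by simp
  have nz: "Determinant.det (A l) \<noteq> 0" if l: "0 \<le> l" "l \<le> 1" for l
  proof
    assume "Determinant.det (A l) = 0"
    then obtain v where v: "v \<in> carrier_vec k" "v \<noteq> 0\<^sub>v k" "A l *\<^sub>v v = 0\<^sub>v k"
      using det_0_iff_vec_prod_zero[of "A l" k] by (auto simp: A_def)
    have "\<not> (\<forall>i<k. v $ i = 0)"
    proof
      assume "\<forall>i<k. v $ i = 0"
      then have "v = 0\<^sub>v k" using v(1) by (intro eq_vecI) auto
      with v(2) show False by simp
    qed
    then obtain i0 where i0: "i0 < k" "v $ i0 \<noteq> 0" by blast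
    have row: "(A l *\<^sub>v v) $ i = (1 - l) * v $ i + l * (\<Sum>j<k. v $ j * mom (i + j) s)"
      if "i < k" for i
    proof -
      have "(A l *\<^sub>v v) $ i = (\<Sum>j<k. ((if i = j then 1 else 0) * (1 - l) + l * mom (i + j) s) * v $ j)"
        using that v(1) by (simp add: A_def scalar_prod_def atLeast0LessThan)
      also have "\<dots> = (\<Sum>j<k. (if j = i then (1 - l) * v $ i else 0) + l * (v $ j * mom (i + j) s))"
        by (rule sum.cong) (auto simp: algebra_simps)
      also have "\<dots> = (1 - l) * v $ i + l * (\<Sum>j<k. v $ j * mom (i + j) s)"
        using that by (simp add: sum.distrib sum_distrib_left)
      finally show ?thesis .
    qed
    have "0 = (\<Sum>i<k. v $ i * (A l *\<^sub>v v) $ i)" using v(3) by simp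
    also have "\<dots> = (\<Sum>i<k. v $ i * ((1 - l) * v $ i + l * (\<Sum>j<k. v $ j * mom (i + j) s)))"
      by (rule sum.cong) (simp_all add: row)
    also have "\<dots> = (1 - l) * (\<Sum>i<k. v $ i * v $ i) + l * (\<Sum>i<k. \<Sum>j<k. v $ i * v $ j * mom (i + j) s)"
      by (simp add: distrib_left sum.distrib sum_distrib_left mult_ac)
    finally have eq0: "(1 - l) * (\<Sum>i<k. v $ i * v $ i) + l * (\<Sum>i<k. \<Sum>j<k. v $ i * v $ j * mom (i + j) s) = 0" by simp
    have Q: "(\<Sum>i<k. \<Sum>j<k. v $ i * v $ j * mom (i + j) s) > 0"
      by (rule quad_pos[where c = "\<lambda>i. v $ i", OF s i0])
    have "v $ i0 * v $ i0 \<le> (\<Sum>i<k. v $ i * v $ i)"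
      by (rule member_le_sum) (use i0 in auto)
    moreover have "v $ i0 * v $ i0 > 0" using i0(2) not_real_square_gt_zero by blast
    ultimately have S: "(\<Sum>i<k. v $ i * v $ i) > 0" by linarith
    show False
    proof (cases "l = 0")
      case True then show False using eq0 S by simp
    next
      case False
      then have "l * (\<Sum>i<k. \<Sum>j<k. v $ i * v $ j * mom (i + j) s) > 0" using l Q by simp
      moreover have "(1 - l) * (\<Sum>i<k. v $ i * v $ i) \<ge> 0" using l S by simp
      ultimately show False using eq0 by linarith
    qed
  qed
  have cont: "continuous_on {0..1} (\<lambda>l. Determinant.det (A l))"
    unfolding A_def det_mat_expand by (simp, intro continuous_intros)
  show ?thesis
  proof (rule ccontr)
    assume "\<not> ?thesis"
    then have "Determinant.det (A 1) \<le> 0" using A1 by simp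
    then obtain l where "0 \<le> l" "l \<le> 1" "Determinant.det (A l) = 0"
      using IVT2'[of "\<lambda>l. Determinant.det (A l)" 1 0 0] A0 cont by auto
    with nz show False by blast
  qed
qed

end

lemma telescope_aux:
  fixes Q :: "nat \<Rightarrow> real"
  shows "(\<Sum>i<Suc n. Q (i + 1) + Q (i - 1) - 2 * Q i) = Q (n + 1) - Q n"
  by (induction n) (auto simp: algebra_simps)

lemma telescope2:
  fixes Q :: "nat \<Rightarrow> real"
  assumes "Q 0 = 0"
  shows "(\<Sum>i<n. (real n - real i) * (Q (i + 1) + Q (i - 1) - 2 * Q i)) = Q n"
proof (induction n)
  case 0 then show ?case using assms by simp
next
  case (Suc n)
  have "(\<Sum>i<Suc n. (real (Suc n) - real i) * (Q (i + 1) + Q (i - 1) - 2 * Q i))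
      = (\<Sum>i<Suc n. (real n - real i) * (Q (i + 1) + Q (i - 1) - 2 * Q i)) + (\<Sum>i<Suc n. Q (i + 1) + Q (i - 1) - 2 * Q i)"
    by (simp add: sum.distrib[symmetric] algebra_simps)
  also have "(\<Sum>i<Suc n. (real n - real i) * (Q (i + 1) + Q (i - 1) - 2 * Q i))
      = (\<Sum>i<n. (real n - real i) * (Q (i + 1) + Q (i - 1) - 2 * Q i))" by simp
  also have "\<dots> = Q n" by (rule Suc.IH)
  also have "(\<Sum>i<Suc n. Q (i + 1) + Q (i - 1) - 2 * Q i) = Q (n + 1) - Q n" by (rule telescope_aux)
  finally show ?case by simp
qed

lemma telescope3:
  fixes Q G :: "nat \<Rightarrow> real"
  assumes "Q 0 = 0" and "\<And>i. G i = Q (i + 1) + Q (i - 1) - 2 * Q i"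
  shows "(\<Sum>j = 1..n. real j * G (n - j)) = Q n"
proof -
  have "(\<Sum>j = 1..n. real j * G (n - j)) = (\<Sum>i<n. real (n - i) * G (n - (n - i)))"
    by (rule sum.reindex_bij_witness[of _ "\<lambda>j. n - j" "\<lambda>i. n - i"]) auto
  also have "\<dots> = (\<Sum>i<n. (real n - real i) * G i)"
    by (rule sum.cong) (auto simp: of_nat_diff)
  also have "\<dots> = Q n" unfolding assms(2) by (rule telescope2[where Q = Q, OF assms(1)])
  finally show ?thesis .
qed

context mgfset
begin

abbreviation HH :: "nat \<Rightarrow> real \<Rightarrow> real" where
  "HH k s \<equiv> Hk mom k (\<lambda>i. i) (\<lambda>i. i) s"

definition Qf :: "nat \<Rightarrow> real \<Rightarrow> real" where
  "Qf k s = (if k = 0 then 0 else HH (k + 1) s * HH (k - 1) s / (HH k s)\<^sup>2)"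

definition D1 :: "nat \<Rightarrow> real \<Rightarrow> real" where
  "D1 k s = (if k = 0 then 0 else Hk mom k (sh (k - 1)) (\<lambda>i. i) s / HH k s)"

lemma HH0: "HH 0 s = 1" by (simp add: Hk_def)

lemma HH1: "HH 1 s = mom 0 s" by (simp add: Hk_def det_single)

lemma HH1': "HH (Suc 0) s = mom 0 s" by (simp add: Hk_def det_single)

lemma hd_eq:
  assumes "s \<in> J"
  shows "hankel_det N \<rho> k s = HH k s"
  unfolding hankel_det_def Hk_def
  by (rule arg_cong[where f = Determinant.det], rule mat_eqI_sq) (simp add: deriv_iter[OF assms])

lemma lnH_d1:
  assumes s: "s \<in> J"
  shows "((\<lambda>s. ln (HH k s)) has_real_derivative D1 k s) (at s)"
proof (cases k)
  case 0 then show ?thesis by (simp add: HH0 D1_def)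
next
  case (Suc n)
  have dm: "\<And>p. (mom p has_real_derivative mom (Suc p) s) (at s)" by (rule mom_deriv[OF s])
  have pos: "HH (Suc n) s > 0" by (rule hankel_pos[OF s])
  have "((\<lambda>s. ln (HH (Suc n) s)) has_real_derivative (1 / HH (Suc n) s) * Hk mom (Suc n) (sh n) (\<lambda>i. i) s) (at s)"
    by (rule DERIV_chain2[OF DERIV_ln_divide[OF pos] Hk_D1[where mm = mom and x = s and n = n, OF dm]])
  then show ?thesis using Suc by (simp add: D1_def)
qed

lemma lnH_d2:
  assumes s: "s \<in> J"
  shows "(D1 k has_real_derivative Qf k s) (at s)"
proof (cases k)
  case 0
  then have "D1 k = (\<lambda>s. 0)" by (simp add: D1_def fun_eq_iff)
  then show ?thesis using 0 by (simp add: Qf_def)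
next
  case (Suc n)
  have dm: "\<And>p. (mom p has_real_derivative mom (Suc p) s) (at s)" by (rule mom_deriv[OF s])
  have pos: "HH (Suc n) s > 0" by (rule hankel_pos[OF s])
  have pos2: "HH (n + 2) s > 0" by (rule hankel_pos[OF s])
  have eqD: "D1 k = (\<lambda>s. Hk mom (Suc n) (sh n) (\<lambda>i. i) s / HH (Suc n) s)"
    using Suc by (simp add: D1_def fun_eq_iff)
  have "((\<lambda>s. Hk mom (Suc n) (sh n) (\<lambda>i. i) s / HH (Suc n) s) has_real_derivative
     (Hk mom (Suc n) (sh n) (sh n) s * HH (Suc n) s - Hk mom (Suc n) (sh n) (\<lambda>i. i) s * Hk mom (Suc n) (sh n) (\<lambda>i. i) s)
      / (HH (Suc n) s * HH (Suc n) s)) (at s)"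
    by (rule DERIV_divide[OF Hk_D2[where mm = mom and x = s and n = n, OF dm] Hk_D1[where mm = mom and x = s and n = n, OF dm]]) (use pos in simp)
  moreover have "(Hk mom (Suc n) (sh n) (sh n) s * HH (Suc n) s - Hk mom (Suc n) (sh n) (\<lambda>i. i) s * Hk mom (Suc n) (sh n) (\<lambda>i. i) s)
      / (HH (Suc n) s * HH (Suc n) s) = Qf k s"
    using Hk_DJ[of mom n s] pos2 Suc by (simp add: Qf_def power2_eq_square)
  ultimately show ?thesis unfolding eqD by simp
qed

definition Ff :: "nat \<Rightarrow> real \<Rightarrow> real" where
  "Ff j s = (if j = 0 then ln (HH 1 s) else ln (HH (j + 1) s) + ln (HH (j - 1) s) - 2 * ln N - 2 * ln (HH j s))"

definition G1 :: "nat \<Rightarrow> real \<Rightarrow> real" where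
  "G1 j s = (if j = 0 then D1 1 s else D1 (j + 1) s + D1 (j - 1) s - 2 * D1 j s)"

definition G2 :: "nat \<Rightarrow> real \<Rightarrow> real" where
  "G2 j s = (if j = 0 then Qf 1 s else Qf (j + 1) s + Qf (j - 1) s - 2 * Qf j s)"

lemma L_eq:
  assumes s: "s \<in> J"
  shows "lanczos_L N \<rho> j s = (if j = 0 then HH 1 s else HH (j + 1) s * HH (j - 1) s / (N\<^sup>2 * (HH j s)\<^sup>2))"
proof (cases j)
  case 0 then show ?thesis using deriv_iter[OF s, of 0] by (simp add: HH1')
next
  case (Suc m) then show ?thesis by (simp add: hd_eq[OF s])
qed

lemma lnL_eq:
  assumes s: "s \<in> J"
  shows "ln (lanczos_L N \<rho> j s) = Ff j s"
proof (cases j)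
  case 0 then show ?thesis using deriv_iter[OF s, of 0] by (simp add: L_eq[OF s] Ff_def HH1')
next
  case (Suc m)
  then have j0: "j \<noteq> 0" by simp
  have Leq: "lanczos_L N \<rho> j s = HH (j + 1) s * HH (j - 1) s / (N\<^sup>2 * (HH j s)\<^sup>2)"
    using L_eq[OF s, of j] by (simp only: j0 if_False)
  have p1: "HH (j + 1) s > 0" "HH (j - 1) s > 0" "HH j s > 0" using hankel_pos[OF s] by auto
  have "ln (HH (j + 1) s * HH (j - 1) s / (N\<^sup>2 * (HH j s)\<^sup>2)) =
     ln (HH (j + 1) s) + ln (HH (j - 1) s) - (ln (N\<^sup>2) + ln ((HH j s)\<^sup>2))"
    using p1 N_pos by (simp add: ln_div ln_mult)
  also have "\<dots> = Ff j s" using p1 N_pos Suc by (simp add: Ff_def ln_realpow)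
  finally show ?thesis unfolding Leq .
qed

lemma Ff_d1:
  assumes s: "s \<in> J"
  shows "(Ff j has_real_derivative G1 j s) (at s)"
proof (cases "j = 0")
  case True
  then have "Ff j = (\<lambda>s. ln (HH 1 s))" by (simp add: Ff_def fun_eq_iff)
  then show ?thesis using lnH_d1[OF s, of 1] True by (simp add: G1_def)
next
  case False
  then have "Ff j = (\<lambda>s. ln (HH (j + 1) s) + ln (HH (j - 1) s) - 2 * ln N - 2 * ln (HH j s))"
    by (simp add: Ff_def fun_eq_iff)
  moreover have "((\<lambda>s. ln (HH (j + 1) s) + ln (HH (j - 1) s) - 2 * ln N - 2 * ln (HH j s)) has_real_derivative
      D1 (j + 1) s + D1 (j - 1) s - 0 - 2 * D1 j s) (at s)"
    by (intro DERIV_diff DERIV_add DERIV_cmult lnH_d1[OF s] DERIV_const)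
  ultimately show ?thesis using False by (simp add: G1_def)
qed

lemma G1_d:
  assumes s: "s \<in> J"
  shows "(G1 j has_real_derivative G2 j s) (at s)"
proof (cases "j = 0")
  case True
  then have "G1 j = D1 1" by (simp add: G1_def fun_eq_iff)
  then show ?thesis using lnH_d2[OF s, of 1] True by (simp add: G2_def)
next
  case False
  then have "G1 j = (\<lambda>s. D1 (j + 1) s + D1 (j - 1) s - 2 * D1 j s)"
    by (simp add: G1_def fun_eq_iff)
  moreover have "((\<lambda>s. D1 (j + 1) s + D1 (j - 1) s - 2 * D1 j s) has_real_derivative
      Qf (j + 1) s + Qf (j - 1) s - 2 * Qf j s) (at s)"
    by (intro DERIV_diff DERIV_add DERIV_cmult lnH_d2[OF s])
  ultimately show ?thesis using False by (simp add: G2_def)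
qed

lemma second_deriv_lnL:
  assumes t: "t \<in> J"
  shows "deriv (deriv (\<lambda>s. ln (lanczos_L N \<rho> j s))) t = G2 j t"
proof -
  have d1: "deriv (\<lambda>s. ln (lanczos_L N \<rho> j s)) s = G1 j s" if s: "s \<in> J" for s
  proof -
    have "\<forall>\<^sub>F x in nhds s. ln (lanczos_L N \<rho> j x) = Ff j x"
      using eventually_nhds_in_open[OF J_open s] by (rule eventually_mono) (rule lnL_eq)
    then have "deriv (\<lambda>s. ln (lanczos_L N \<rho> j s)) s = deriv (Ff j) s"
      by (rule deriv_cong_ev) simp
    also have "\<dots> = G1 j s" by (rule DERIV_imp_deriv[OF Ff_d1[OF s]])
    finally show ?thesis .
  qed
  have "\<forall>\<^sub>F x in nhds t. deriv (\<lambda>s. ln (lanczos_L N \<rho> j s)) x = G1 j x"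
    using eventually_nhds_in_open[OF J_open t] by (rule eventually_mono) (rule d1)
  then have "deriv (deriv (\<lambda>s. ln (lanczos_L N \<rho> j s))) t = deriv (G1 j) t"
    by (rule deriv_cong_ev) simp
  also have "\<dots> = G2 j t" by (rule DERIV_imp_deriv[OF G1_d[OF t]])
  finally show ?thesis .
qed

lemma main:
  assumes t: "t \<in> J" and n: "n \<ge> 1"
  shows "lanczos_L N \<rho> n t =
    (1 / N) * (\<Sum>j = 1..n. (real j / N) * deriv (deriv (\<lambda>s. ln (lanczos_L N \<rho> (n - j) s))) t)"
proof -
  have G2eq: "G2 i t = Qf (i + 1) t + Qf (i - 1) t - 2 * Qf i t" for i
    by (simp add: G2_def Qf_def)
  have "(\<Sum>j = 1..n. (real j / N) * deriv (deriv (\<lambda>s. ln (lanczos_L N \<rho> (n - j) s))) t)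
      = (\<Sum>j = 1..n. real j * G2 (n - j) t) / N"
    by (simp add: second_deriv_lnL[OF t] sum_divide_distrib)
  also have "(\<Sum>j = 1..n. real j * G2 (n - j) t) = Qf n t"
    by (rule telescope3[where Q = "\<lambda>k. Qf k t"]) (simp_all add: Qf_def G2eq)
  finally have "(1 / N) * (\<Sum>j = 1..n. (real j / N) * deriv (deriv (\<lambda>s. ln (lanczos_L N \<rho> (n - j) s))) t)
     = Qf n t / N\<^sup>2" by (simp add: power2_eq_square)
  moreover have "lanczos_L N \<rho> n t = Qf n t / N\<^sup>2"
    using n by (simp add: L_eq[OF t] Qf_def)
  ultimately show ?thesis by simp
qed

end

theorem theorem1:
  fixes N :: real and \<rho> :: "real measure" and J :: "real set"
    and n :: nat and t :: real
  assumes N_pos: "N > 0"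
    and borel: "sets \<rho> = sets borel"
    and inf_supp: "infinite (measure_support \<rho>)"
    and J_open: "open J" and J_interval: "is_interval J" and J_ne: "J \<noteq> {}"
    and finite_mgf: "\<forall>s\<in>J. integrable \<rho> (\<lambda>\<epsilon>. exp (s * N * \<epsilon>))"
    and n_ge: "n \<ge> 1"
    and t_in: "t \<in> J"
  shows "lanczos_L N \<rho> n t =
    (1 / N) * (\<Sum>j = 1..n. (real j / N) *
       deriv (deriv (\<lambda>s. ln (lanczos_L N \<rho> (n - j) s))) t)"
proof -
  interpret mgfset N \<rho> J
    using N_pos borel inf_supp J_open finite_mgf by unfold_locales
  show ?thesis by (rule main[OF t_in n_ge])
qed

end
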